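(* Let $\mathcal{C}$ be a systematic $[n,k,d]$ linear code over $\mathbb{F}_q$ with information symbols in the first $k$ coordinates, which is an $(r,\delta)_i$ code and achieves $$d = n-k+1-\left(\left\lceil \tfrac{k}{r}\right\rceil -1\right)(\delta-1).$$ Then the generalized Hamming weights of the dual code satisfy $$d^{\perp}_{(\lceil k/r\rceil -1)(\delta-1)+i} \;=\; k+\left(\left\lceil \tfrac{k}{r}\right\rceil -1\right)(\delta-1)+i$$ for all $1 \le i \le n-k-(\delta-1)\left(\lceil k/r\rceil -1\right)$.
   Context: For a linear code $\mathcal{D}$ of dimension $m$, its $j$-th generalized Hamming weight ($1\le j\le m$) is the minimum, over all $j$-dimensional subcodes $\mathcal{E}$ of $\mathcal{D}$, of the size of the support $\mathrm{supp}(\mathcal{E}) = \bigcup_{\mathbf{c}\in\mathcal{E}}\{l : c_l \neq 0\}$. $d^\perp_j$ denotes the $j$-th generalized Hamming weight of the dual code $\mathcal{C}^\perp$. Coordinate $i$ has locality $(r,\delta)$ if there is $S_i \subseteq [n]$ with $i\in S_i$, $|S_i|\le r+\delta-1$, such that the punctured code $\mathcal{C}|_{S_i}$ (delete coordinates outside $S_i$) has minimum distance at least $\delta$. An $(r,\delta)_i$ code is a systematic linear code in which all $k$ information coordinates have locality $(r,\delta)$. *)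

theory Defs
  imports Complex_Main "HOL-Library.Function_Algebras"
begin

text \<open>Vectors over a field are modelled as functions nat => 'a; a vector of
length n is one that vanishes at all coordinates >= n (coordinates are 0..n-1,
so "the first k coordinates" are 0..k-1).\<close>

definition fscale :: "'a::field \<Rightarrow> (nat \<Rightarrow> 'a) \<Rightarrow> (nat \<Rightarrow> 'a)" where
  "fscale c v = (\<lambda>i. c * v i)"

interpretation fvs: vector_space fscale
  by unfold_locales (auto simp: fscale_def fun_eq_iff algebra_simps)

definition vecs :: "nat \<Rightarrow> (nat \<Rightarrow> 'a::field) set" where
  "vecs n = {v. \<forall>i\<ge>n. v i = 0}"

definition linear_code :: "nat \<Rightarrow> (nat \<Rightarrow> 'a::field) set \<Rightarrow> bool" where
  "linear_code n C \<longleftrightarrow> fvs.subspace C \<and> C \<subseteq> vecs n"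

definition supp :: "(nat \<Rightarrow> 'a::zero) \<Rightarrow> nat set" where
  "supp v = {l. v l \<noteq> 0}"

definition code_supp :: "(nat \<Rightarrow> 'a::zero) set \<Rightarrow> nat set" where
  "code_supp E = (\<Union>c\<in>E. supp c)"

definition min_dist :: "(nat \<Rightarrow> 'a::zero) set \<Rightarrow> nat" where
  "min_dist C = Min ((\<lambda>c. card (supp c)) ` (C - {0}))"

definition ghw :: "(nat \<Rightarrow> 'a::field) set \<Rightarrow> nat \<Rightarrow> nat" where
  "ghw D j = (LEAST w. \<exists>E. fvs.subspace E \<and> E \<subseteq> D \<and> fvs.dim E = j \<and> card (code_supp E) = w)"

definition dual_code :: "nat \<Rightarrow> (nat \<Rightarrow> 'a::field) set \<Rightarrow> (nat \<Rightarrow> 'a) set" where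
  "dual_code n C = {v \<in> vecs n. \<forall>c\<in>C. (\<Sum>l<n. v l * c l) = 0}"

definition puncture :: "nat set \<Rightarrow> (nat \<Rightarrow> 'a::zero) set \<Rightarrow> (nat \<Rightarrow> 'a) set" where
  "puncture S C = (\<lambda>c l. if l \<in> S then c l else 0) ` C"

text \<open>Minimum distance at least delta (vacuous for the zero code).\<close>
definition min_dist_ge :: "(nat \<Rightarrow> 'a::zero) set \<Rightarrow> nat \<Rightarrow> bool" where
  "min_dist_ge C \<delta> \<longleftrightarrow> (\<forall>c\<in>C. c \<noteq> 0 \<longrightarrow> \<delta> \<le> card (supp c))"

definition has_locality :: "nat \<Rightarrow> (nat \<Rightarrow> 'a::zero) set \<Rightarrow> nat \<Rightarrow> nat \<Rightarrow> nat \<Rightarrow> bool" where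
  "has_locality n C r \<delta> i \<longleftrightarrow>
     (\<exists>S \<subseteq> {..<n}. i \<in> S \<and> card S \<le> r + \<delta> - 1 \<and> min_dist_ge (puncture S C) \<delta>)"

definition systematic_first :: "nat \<Rightarrow> (nat \<Rightarrow> 'a::field) set \<Rightarrow> bool" where
  "systematic_first k C \<longleftrightarrow> (\<forall>x\<in>vecs k. \<exists>!c\<in>C. \<forall>l<k. c l = x l)"

definition rdelta_i_code :: "nat \<Rightarrow> nat \<Rightarrow> (nat \<Rightarrow> 'a::field) set \<Rightarrow> nat \<Rightarrow> nat \<Rightarrow> bool" where
  "rdelta_i_code n k C r \<delta> \<longleftrightarrow> systematic_first k C \<and> (\<forall>i<k. has_locality n C r \<delta> i)"

end

theory Submission imports Defs "HOL-Library.FuncSet" begin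

lemma sum_fun_apply: "(\<Sum>x\<in>A. f x) (l::nat) = (\<Sum>x\<in>A. (f x l :: 'a::comm_monoid_add))"
  by (induction A rule: infinite_finite_induct) auto

lemma finite_vecs: "finite (vecs n :: (nat \<Rightarrow> 'a::{finite,field}) set)"
proof -
  let ?F = "\<lambda>(f::nat \<Rightarrow> 'a) l. if l < n then f l else (0::'a)"
  have "vecs n \<subseteq> ?F ` (PiE {..<n} (\<lambda>_. (UNIV::'a set)))"
  proof
    fix v :: "nat \<Rightarrow> 'a" assume v: "v \<in> vecs n"
    have eq: "v = ?F (restrict v {..<n})"
    proof (rule ext)
      fix l show "v l = ?F (restrict v {..<n}) l"
        using v unfolding vecs_def restrict_def by (cases "l < n") auto
    qed
    show "v \<in> ?F ` (PiE {..<n} (\<lambda>_. (UNIV::'a set)))" by (rule image_eqI[where x="restrict v {..<n}"], rule eq, simp)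
  qed
  moreover have "finite (PiE {..<n} (\<lambda>_. (UNIV::'a set)))" by (rule finite_PiE) auto
  ultimately show ?thesis using finite_subset by blast
qed

lemma subspace_vanish:
  assumes "fvs.subspace K"
  shows "fvs.subspace {v\<in>K. \<forall>l\<in>L. v l = (0::'a::field)}"
  using assms unfolding fvs.subspace_def by (auto simp: fscale_def)

lemma dim_shorten1:
  assumes K: "fvs.subspace K" and Kn: "K \<subseteq> vecs n"
  shows "fvs.dim K \<le> fvs.dim {v\<in>K. v l = (0::'a::{finite,field})} + 1"
proof -
  let ?K' = "{v\<in>K. v l = 0}"
  obtain B where B: "B \<subseteq> ?K'" "fvs.independent B" "?K' \<subseteq> fvs.span B" "card B = fvs.dim ?K'"
    by (rule fvs.basis_exists)
  have "B \<subseteq> vecs n" using B(1) Kn by blast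
  then have fB: "finite B" by (rule finite_subset) (rule finite_vecs)
  show ?thesis
  proof (cases "K \<subseteq> ?K'")
    case True
    then have "K = ?K'" by auto
    then show ?thesis by simp
  next
    case False
    then obtain u where u: "u \<in> K" "u l \<noteq> 0" by auto
    have "K \<subseteq> fvs.span (insert u B)"
    proof
      fix v assume v: "v \<in> K"
      let ?w = "v - fscale (v l / u l) u"
      have "?w \<in> K" by (rule fvs.subspace_diff[OF K v fvs.subspace_scale[OF K u(1)]])
      moreover have "?w l = 0" using u by (simp add: fscale_def)
      ultimately have "?w \<in> ?K'" by blast
      then have "?w \<in> fvs.span B" using B(3) by blast
      then have "?w \<in> fvs.span (insert u B)" using fvs.span_mono[OF subset_insertI[of B u]] by blast
      moreover have "fscale (v l / u l) u \<in> fvs.span (insert u B)"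
        by (rule fvs.span_scale[OF fvs.span_base]) simp
      ultimately have "?w + fscale (v l / u l) u \<in> fvs.span (insert u B)"
        by (rule fvs.span_add)
      moreover have "?w + fscale (v l / u l) u = v" by simp
      ultimately show "v \<in> fvs.span (insert u B)" by simp
    qed
    then have "fvs.dim K \<le> card (insert u B)" using fB by (intro fvs.dim_le_card) simp_all
    also have "\<dots> \<le> card B + 1" using fB by (simp add: card_insert_if)
    finally show ?thesis using B(4) by simp
  qed
qed

lemma dim_shorten:
  assumes K: "fvs.subspace K" and Kn: "K \<subseteq> vecs n" and L: "finite L"
  shows "fvs.dim K \<le> fvs.dim {v\<in>K. \<forall>l\<in>L. v l = (0::'a::{finite,field})} + card L"
  using L
proof (induction L rule: finite_induct)
  case empty then show ?case by simp
next
  case (insert a L)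
  let ?KL = "{v\<in>K. \<forall>l\<in>L. v l = (0::'a)}"
  have "fvs.dim ?KL \<le> fvs.dim {v\<in>?KL. v a = 0} + 1"
    by (rule dim_shorten1[of _ n]) (use K Kn subspace_vanish in auto)
  moreover have "{v\<in>?KL. v a = 0} = {v\<in>K. \<forall>l\<in>insert a L. v l = 0}" by auto
  ultimately show ?case using insert by simp
qed

lemma dim_pos_nonzero:
  assumes "1 \<le> fvs.dim K"
  obtains c where "c \<in> K" "c \<noteq> (0::nat \<Rightarrow> 'a::field)"
proof -
  have "\<not> K \<subseteq> {0}"
  proof
    assume "K \<subseteq> {0}"
    then have "K \<subseteq> fvs.span {}" by simp
    then have "fvs.dim K \<le> card ({}::(nat\<Rightarrow>'a) set)" by (intro fvs.dim_le_card) auto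
    then show False using assms by simp
  qed
  then show ?thesis using that by blast
qed

lemma code_supp_sub:
  assumes "K \<subseteq> vecs n" shows "code_supp K \<subseteq> {..<n}"
proof
  fix l assume "l \<in> code_supp K"
  then obtain c where "c \<in> K" "c l \<noteq> 0" by (auto simp: code_supp_def supp_def)
  moreover have "c \<in> vecs n" using assms \<open>c \<in> K\<close> by blast
  ultimately show "l \<in> {..<n}" unfolding vecs_def by (auto simp: not_less[symmetric])
qed

lemma supp_weight:
  assumes s1: "1 \<le> s"
  shows "fvs.subspace K \<Longrightarrow> K \<subseteq> vecs n \<Longrightarrow> (\<And>c. c \<in> K \<Longrightarrow> c \<noteq> 0 \<Longrightarrow> d \<le> card (supp c))
    \<Longrightarrow> s \<le> fvs.dim K \<Longrightarrow> d + s \<le> card (code_supp (K::(nat \<Rightarrow> 'a::{finite,field}) set)) + 1"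
  using s1
proof (induction s arbitrary: K rule: nat_induct_at_least)
  case base
  assume K: "fvs.subspace K" and Kn: "K \<subseteq> vecs n"
    and md: "\<And>c. c \<in> K \<Longrightarrow> c \<noteq> 0 \<Longrightarrow> d \<le> card (supp c)" and s: "1 \<le> fvs.dim K"
  obtain c where c: "c \<in> K" "c \<noteq> 0" using dim_pos_nonzero[OF s] by blast
  have "supp c \<subseteq> code_supp K" using c by (auto simp: code_supp_def)
  moreover have "finite (code_supp K)" using code_supp_sub[OF Kn] finite_subset by blast
  ultimately have "card (supp c) \<le> card (code_supp K)" by (rule card_mono[rotated])
  then show ?case using md c by fastforce
next
  case (Suc s)
  assume K: "fvs.subspace K" and Kn: "K \<subseteq> vecs n"
    and md: "\<And>c. c \<in> K \<Longrightarrow> c \<noteq> 0 \<Longrightarrow> d \<le> card (supp c)" and s: "Suc s \<le> fvs.dim K"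
  have "1 \<le> fvs.dim K" using s Suc(1) by simp
  then obtain c where c: "c \<in> K" "c \<noteq> 0" by (rule dim_pos_nonzero)
  then obtain l where l: "c l \<noteq> 0" by (auto simp: fun_eq_iff)
  let ?K' = "{v\<in>K. v l = 0}"
  have "fvs.dim K \<le> fvs.dim ?K' + 1" by (rule dim_shorten1) (use K Kn in auto)
  then have s': "s \<le> fvs.dim ?K'" using s by simp
  have IH: "d + s \<le> card (code_supp ?K') + 1"
  proof (rule Suc.IH)
    show "s \<le> fvs.dim ?K'" by (rule s')
    show "fvs.subspace ?K'" using subspace_vanish[OF K, of "{l}"] by simp
    show "?K' \<subseteq> vecs n" using Kn by auto
    show "\<And>c. c \<in> ?K' \<Longrightarrow> c \<noteq> 0 \<Longrightarrow> d \<le> card (supp c)" using md by blast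
  qed
  have fin: "finite (code_supp K)" using code_supp_sub[OF Kn] finite_subset by blast
  have "code_supp ?K' \<subseteq> code_supp K - {l}" by (auto simp: code_supp_def supp_def)
  moreover have "l \<in> code_supp K" using c l by (auto simp: code_supp_def supp_def)
  ultimately have "code_supp ?K' \<subset> code_supp K" by blast
  then have "card (code_supp ?K') < card (code_supp K)" by (rule psubset_card_mono[OF fin])
  then show ?case using IH by simp
qed

lemma dual_basis:
  "fvs.subspace E \<Longrightarrow> E \<subseteq> vecs n \<Longrightarrow> code_supp E \<subseteq> S \<Longrightarrow> j \<le> fvs.dim E \<Longrightarrow>
   \<exists>J \<subseteq> S. finite J \<and> card J = j \<and>
     (\<forall>l\<in>J. \<exists>e\<in>E. e l = (1::'a::{finite,field}) \<and> (\<forall>l'\<in>J. l' \<noteq> l \<longrightarrow> e l' = 0))"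
proof (induction j arbitrary: E S)
  case 0 then show ?case by (intro exI[of _ "{}"]) auto
next
  case (Suc j)
  assume K: "fvs.subspace E" and Kn: "E \<subseteq> vecs n" and S: "code_supp E \<subseteq> S"
    and s: "Suc j \<le> fvs.dim E"
  have "1 \<le> fvs.dim E" using s by simp
  then obtain c where c: "c \<in> E" "c \<noteq> 0" by (rule dim_pos_nonzero)
  then obtain l where l: "c l \<noteq> 0" by (auto simp: fun_eq_iff)
  define u where "u = fscale (1 / c l) c"
  have uE: "u \<in> E" using K c by (simp add: u_def fvs.subspace_scale)
  have ul: "u l = 1" using l by (simp add: u_def fscale_def)
  let ?E' = "{v\<in>E. v l = 0}"
  have "fvs.dim E \<le> fvs.dim ?E' + 1" by (rule dim_shorten1) (use K Kn in auto)
  then have "j \<le> fvs.dim ?E'" using s by simp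
  moreover have "code_supp ?E' \<subseteq> S - {l}" using S by (auto simp: code_supp_def supp_def)
  ultimately obtain J' where J': "J' \<subseteq> S - {l}" "finite J'" "card J' = j"
    "\<forall>l0\<in>J'. \<exists>e\<in>?E'. e l0 = 1 \<and> (\<forall>l'\<in>J'. l' \<noteq> l0 \<longrightarrow> e l' = 0)"
    using Suc.IH[of ?E' "S - {l}"] K Kn subspace_vanish[of E "{l}"] by auto
  then have "\<forall>l0\<in>J'. \<exists>e. e \<in> E \<and> e l = 0 \<and> e l0 = 1 \<and> (\<forall>l'\<in>J'. l' \<noteq> l0 \<longrightarrow> e l' = 0)"
    by blast
  from bchoice[OF this] obtain g where g0: "\<forall>l0\<in>J'. g l0 \<in> E \<and> g l0 l = 0 \<and> g l0 l0 = 1 \<and>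
      (\<forall>l'\<in>J'. l' \<noteq> l0 \<longrightarrow> g l0 l' = 0)" by blast
  then have g: "\<And>l0. l0 \<in> J' \<Longrightarrow> g l0 \<in> E \<and> g l0 l = 0 \<and> g l0 l0 = 1 \<and>
      (\<forall>l'\<in>J'. l' \<noteq> l0 \<longrightarrow> g l0 l' = 0)" by blast
  define w where "w = u - (\<Sum>l0\<in>J'. fscale (u l0) (g l0))"
  have wE: "w \<in> E" unfolding w_def
    using K uE g by (intro fvs.subspace_diff fvs.subspace_sum fvs.subspace_scale) auto
  have wl: "w l = 1" using ul g by (simp add: w_def sum_fun_apply fscale_def)
  have wJ: "w l' = 0" if "l' \<in> J'" for l'
  proof -
    have "(\<Sum>l0\<in>J'. fscale (u l0) (g l0)) l' = (\<Sum>l0\<in>J'. u l0 * g l0 l')"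
      by (simp add: sum_fun_apply fscale_def)
    also have "\<dots> = (\<Sum>l0\<in>J'. if l0 = l' then u l' else 0)"
      using g that by (intro sum.cong) auto
    also have "\<dots> = u l'" using that J'(2) by simp
    finally show ?thesis by (simp add: w_def)
  qed
  have lJ: "l \<notin> J'" using J'(1) by auto
  have "l \<in> S" using S c l by (auto simp: code_supp_def supp_def)
  show ?case
  proof (intro exI[of _ "insert l J'"] conjI ballI)
    show "insert l J' \<subseteq> S" using J'(1) \<open>l \<in> S\<close> by auto
    show "finite (insert l J')" using J' by simp
    show "card (insert l J') = Suc j" using J' lJ by simp
    fix l0 assume "l0 \<in> insert l J'"
    then show "\<exists>e\<in>E. e l0 = 1 \<and> (\<forall>l'\<in>insert l J'. l' \<noteq> l0 \<longrightarrow> e l' = 0)"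
    proof
      assume "l0 = l" then show ?thesis using wE wl wJ by auto
    next
      assume "l0 \<in> J'" then show ?thesis using g by auto
    qed
  qed
qed

lemma dual_sub: "dual_code n C \<subseteq> vecs n"
  by (auto simp: dual_code_def)

lemma lower_bound:
  fixes C :: "(nat \<Rightarrow> 'a::{finite,field}) set"
  assumes C: "fvs.subspace C" and Cn: "C \<subseteq> vecs n" and dimC: "fvs.dim C = k"
    and md: "\<And>c. c \<in> C \<Longrightarrow> c \<noteq> 0 \<Longrightarrow> d \<le> card (supp c)"
    and dn: "d + k + m = n + 1"
    and E: "fvs.subspace E" and ED: "E \<subseteq> dual_code n C" and j: "j \<le> fvs.dim E" "m + 1 \<le> j"
  shows "k + j \<le> card (code_supp E)"
proof (rule ccontr)
  assume less: "\<not> k + j \<le> card (code_supp E)"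
  define S where "S = code_supp E"
  have En: "E \<subseteq> vecs n" using ED dual_sub by blast
  have Sn: "S \<subseteq> {..<n}" using code_supp_sub[OF En] by (simp add: S_def)
  have finS: "finite S" using Sn finite_subset by blast
  obtain J where J: "J \<subseteq> S" "finite J" "card J = j"
    "\<forall>l\<in>J. \<exists>e\<in>E. e l = (1::'a) \<and> (\<forall>l'\<in>J. l' \<noteq> l \<longrightarrow> e l' = 0)"
    using dual_basis[OF E En _ j(1), of S] S_def by auto
  define L where "L = S - J"
  have cL: "card L = card S - j" using J finS by (simp add: L_def card_Diff_subset)
  have jS: "j \<le> card S" using card_mono[OF finS J(1)] J(3) by simp
  define K0 where "K0 = {c\<in>C. \<forall>l\<in>L. c l = 0}"
  have K0: "fvs.subspace K0" using subspace_vanish[OF C] by (simp add: K0_def)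
  have K0n: "K0 \<subseteq> vecs n" using Cn by (auto simp: K0_def)
  have "k \<le> fvs.dim K0 + card L" using dim_shorten[OF C Cn, of L] finS dimC
    by (simp add: K0_def L_def)
  then have dK0: "k + j \<le> fvs.dim K0 + card S" using cL jS by simp
  have van: "c l = 0" if c: "c \<in> K0" and l: "l \<in> S" for c l
  proof (cases "l \<in> L")
    case True then show ?thesis using c by (simp add: K0_def)
  next
    case False
    then have lJ: "l \<in> J" using l by (simp add: L_def)
    then obtain e where e: "e \<in> E" "e l = 1" "\<forall>l'\<in>J. l' \<noteq> l \<longrightarrow> e l' = 0" using J(4) by blast
    have eS: "e l' = 0" if "l' \<notin> S" for l'
      using that e(1) by (auto simp: S_def code_supp_def supp_def)
    have "c \<in> C" using c by (simp add: K0_def)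
    then have "(\<Sum>l'<n. e l' * c l') = 0" using e(1) ED by (auto simp: dual_code_def)
    moreover have "(\<Sum>l'<n. e l' * c l') = (\<Sum>l'<n. if l' = l then c l else 0)"
    proof (intro sum.cong refl)
      fix l' assume "l' \<in> {..<n}"
      show "e l' * c l' = (if l' = l then c l else 0)"
      proof (cases "l' = l")
        case True then show ?thesis using e by simp
      next
        case False
        show ?thesis
        proof (cases "l' \<in> S")
          case True
          then show ?thesis
          proof (cases "l' \<in> J")
            case True then show ?thesis using e False by simp
          next
            case f2: False
            then have "l' \<in> L" using True by (simp add: L_def)
            then show ?thesis using c False by (simp add: K0_def)
          qed
        next
          case f3: False then show ?thesis using eS False by simp
        qed
      qed
    qed
    moreover have "l < n" using l Sn by auto
    ultimately show ?thesis by simp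
  qed
  have csK: "code_supp K0 \<subseteq> {..<n} - S"
    using code_supp_sub[OF K0n] van by (auto simp: code_supp_def supp_def)
  have cK: "card (code_supp K0) \<le> n - card S"
    using card_mono[OF finite_Diff[OF finite_lessThan] csK] card_Diff_subset[OF finS Sn] by simp
  have "1 \<le> fvs.dim K0" using dK0 less S_def by simp
  then have "d + fvs.dim K0 \<le> card (code_supp K0) + 1"
    using supp_weight[OF _ K0 K0n, of "fvs.dim K0" d] md by (auto simp: K0_def)
  moreover have "card S \<le> n" using card_mono[OF finite_lessThan Sn] by simp
  ultimately show False using cK dK0 dn j(2) by linarith
qed

lemma vecs_subspace: "fvs.subspace (vecs n :: (nat \<Rightarrow> 'a::field) set)"
  by (auto simp: fvs.subspace_def vecs_def fscale_def)

lemma dual_subspace: "fvs.subspace (dual_code n C :: (nat \<Rightarrow> 'a::field) set)"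
  unfolding fvs.subspace_def
proof (intro conjI ballI allI)
  show "0 \<in> dual_code n C" by (simp add: dual_code_def vecs_def)
  fix x y assume x: "x \<in> dual_code n C" and y: "y \<in> dual_code n C"
  show "x + y \<in> dual_code n C"
    using x y by (auto simp: dual_code_def vecs_def distrib_right sum.distrib)
next
  fix c :: 'a and x assume x: "x \<in> dual_code n C"
  have "\<forall>v\<in>C. (\<Sum>l<n. c * x l * v l) = 0"
    using x by (auto simp: dual_code_def sum_distrib_left[symmetric] mult.assoc)
  then show "fscale c x \<in> dual_code n C"
    using x by (auto simp: dual_code_def vecs_def fscale_def)
qed

lemma upper_bound:
  fixes C :: "(nat \<Rightarrow> 'a::{finite,field}) set"
  assumes C: "fvs.subspace C" and sys: "systematic_first k C" and kj: "k + j \<le> n"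
  shows "\<exists>E. fvs.subspace E \<and> E \<subseteq> dual_code n C \<and> fvs.dim E = j \<and> card (code_supp E) \<le> k + j"
proof -
  have "\<forall>l. \<exists>c. l < k \<longrightarrow> c \<in> C \<and> (\<forall>l'<k. c l' = (if l' = l then 1 else 0))"
  proof (intro allI impI)
    fix l
    show "\<exists>c. l < k \<longrightarrow> c \<in> C \<and> (\<forall>l'<k. c l' = (if l' = l then 1 else 0))"
    proof (cases "l < k")
      case True
      have "(\<lambda>l'. if l' = l then 1 else 0) \<in> (vecs k :: (nat \<Rightarrow> 'a) set)"
        using True by (auto simp: vecs_def)
      then obtain c where "c \<in> C" "\<forall>l'<k. c l' = (if l' = l then 1 else 0)"
        using sys unfolding systematic_first_def by fastforce
      then show ?thesis by blast
    qed simp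
  qed
  from choice[OF this] obtain cs where cs0: "\<forall>l. l < k \<longrightarrow> cs l \<in> C \<and> (\<forall>l'<k. cs l l' = (if l' = l then (1::'a) else 0))"
    by blast
  then have cs: "\<And>l. l < k \<Longrightarrow> cs l \<in> C \<and> (\<forall>l'<k. cs l l' = (if l' = l then (1::'a) else 0))"
    by blast
  have repr: "c = (\<Sum>l<k. fscale (c l) (cs l))" if c: "c \<in> C" for c
  proof -
    let ?y = "\<Sum>l<k. fscale (c l) (cs l)"
    have yC: "?y \<in> C" using C cs by (intro fvs.subspace_sum fvs.subspace_scale) auto
    have yc: "?y l' = c l'" if "l' < k" for l'
    proof -
      have "?y l' = (\<Sum>l<k. c l * cs l l')" by (simp add: sum_fun_apply fscale_def)
      also have "\<dots> = (\<Sum>l<k. if l = l' then c l' else 0)"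
        using cs that by (intro sum.cong) auto
      finally show ?thesis using that by simp
    qed
    let ?x = "\<lambda>l'. if l' < k then c l' else 0"
    have xv: "?x \<in> vecs k" by (auto simp: vecs_def)
    have ex1: "\<exists>!c'\<in>C. \<forall>l<k. c' l = ?x l"
      using bspec[OF sys[unfolded systematic_first_def] xv] .
    have uniq: "\<And>a b. a \<in> C \<Longrightarrow> (\<forall>l<k. a l = ?x l) \<Longrightarrow> b \<in> C \<Longrightarrow> (\<forall>l<k. b l = ?x l) \<Longrightarrow> a = b"
      using ex1 by blast
    have "\<forall>l<k. c l = ?x l" by simp
    moreover have "\<forall>l<k. ?y l = ?x l" using yc by simp
    ultimately show ?thesis using uniq[OF c _ yC] by blast
  qed
  define h where "h p = (\<lambda>l'. if l' = p then 1 else if l' < k then - cs l' p else (0::'a))" for p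
  have hD: "h p \<in> dual_code n C" if p: "k \<le> p" "p < n" for p
  proof -
    have "h p \<in> vecs n" using p by (auto simp: vecs_def h_def)
    moreover have "(\<Sum>l'<n. h p l' * c l') = 0" if c: "c \<in> C" for c
    proof -
      define g where "g l' = - (cs l' p * c l')" for l'
      have "(\<Sum>l'<n. h p l' * c l') = (\<Sum>l'<n. (if l' = p then c p else 0) + (if l' < k then g l' else 0))"
        using p by (intro sum.cong) (auto simp: h_def g_def)
      also have "\<dots> = (\<Sum>l'<n. (if l' = p then c p else 0)) + (\<Sum>l'<n. (if l' < k then g l' else 0))"
        by (rule sum.distrib)
      also have "(\<Sum>l'<n. (if l' = p then c p else 0)) = c p" using p by simp
      also have "(\<Sum>l'<n. (if l' < k then g l' else 0)) = (\<Sum>l'<k. (if l' < k then g l' else 0))"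
        by (rule sum.mono_neutral_right) (use kj in auto)
      also have "\<dots> = (\<Sum>l'<k. g l')" by simp
      also have "c p = (\<Sum>l<k. fscale (c l) (cs l)) p" using repr[OF c] by simp
      also have "\<dots> = (\<Sum>l<k. cs l p * c l)" by (simp add: sum_fun_apply fscale_def mult.commute)
      finally show ?thesis by (simp add: g_def sum_negf)
    qed
    ultimately show ?thesis by (simp add: dual_code_def)
  qed
  have hpp: "h p p = 1" for p by (simp add: h_def)
  have hpq: "h p q = 0" if "p \<noteq> q" "k \<le> q" for p q using that by (simp add: h_def)
  define H where "H = h ` {k..<k+j}"
  have inj: "inj_on h {k..<k+j}"
  proof (rule inj_onI)
    fix p q assume "p \<in> {k..<k+j}" "q \<in> {k..<k+j}" "h p = h q"
    then show "p = q" using hpp[of q] hpq[of p q] by (cases "p = q") auto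
  qed
  have cH: "card H = j" using inj by (simp add: H_def card_image)
  have ind: "fvs.independent H"
    unfolding fvs.dependent_explicit
  proof clarify
    fix T u v assume T: "finite T" "T \<subseteq> H" "(\<Sum>v\<in>T. fscale (u v) v) = 0" "v \<in> T" "u v \<noteq> 0"
    then obtain p where p: "p \<in> {k..<k+j}" "v = h p" using H_def by auto
    have "0 = (\<Sum>v\<in>T. fscale (u v) v) p" using T(3) by simp
    also have "\<dots> = (\<Sum>v'\<in>T. u v' * v' p)" by (simp add: sum_fun_apply fscale_def)
    also have "\<dots> = (\<Sum>v'\<in>T. if v' = v then u v else 0)"
    proof (intro sum.cong refl)
      fix v' assume "v' \<in> T"
      then obtain q where q: "q \<in> {k..<k+j}" "v' = h q" using T(2) H_def by auto
      show "u v' * v' p = (if v' = v then u v else 0)"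
        using p q hpp[of p] hpq[of q p] by (cases "q = p") auto
    qed
    also have "\<dots> = u v" using T by simp
    finally show False using T(5) by simp
  qed
  define E where "E = fvs.span H"
  have HD: "H \<subseteq> dual_code n C" using hD kj by (auto simp: H_def)
  have HV: "H \<subseteq> vecs (k+j)" by (auto simp: H_def h_def vecs_def)
  have ED: "E \<subseteq> dual_code n C" using fvs.span_minimal[OF HD dual_subspace] by (simp add: E_def)
  have EV: "E \<subseteq> vecs (k+j)" using fvs.span_minimal[OF HV vecs_subspace] by (simp add: E_def)
  have "card (code_supp E) \<le> card {..<k+j}"
    using code_supp_sub[OF EV] by (intro card_mono) auto
  then show ?thesis using ED cH ind
    by (intro exI[of _ E]) (auto simp: E_def fvs.dim_span_eq_card_independent fvs.dim_eq_card_independent)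
qed


theorem corollary1:
  fixes C :: "(nat \<Rightarrow> 'a::{finite,field}) set"
    and n k d r \<delta> :: nat
  assumes "linear_code n C"
    and "fvs.dim C = k"
    and "1 \<le> k" and "k \<le> n"
    and "min_dist C = d"
    and "1 \<le> r" and "1 \<le> \<delta>"
    and "rdelta_i_code n k C r \<delta>"
    and "int d = int n - int k + 1 - (\<lceil>real k / real r\<rceil> - 1) * (int \<delta> - 1)"
  shows "\<forall>i::nat. 1 \<le> i \<and> int i \<le> int n - int k - (int \<delta> - 1) * (\<lceil>real k / real r\<rceil> - 1) \<longrightarrow>
           int (ghw (dual_code n C) (nat ((\<lceil>real k / real r\<rceil> - 1) * (int \<delta> - 1) + int i)))
             = int k + (\<lceil>real k / real r\<rceil> - 1) * (int \<delta> - 1) + int i"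
proof (intro allI impI)
  fix i :: nat
  assume i: "1 \<le> i \<and> int i \<le> int n - int k - (int \<delta> - 1) * (\<lceil>real k / real r\<rceil> - 1)"
  define t where "t = \<lceil>real k / real r\<rceil> - 1"
  have "real k / real r > 0" using assms(3,6) by simp
  then have "\<lceil>real k / real r\<rceil> \<ge> 1" by simp
  then have t0: "t \<ge> 0" by (simp add: t_def)
  define m where "m = nat (t * (int \<delta> - 1))"
  have mi: "int m = t * (int \<delta> - 1)" using t0 assms(7) by (simp add: m_def)
  have C: "fvs.subspace C" and Cn: "C \<subseteq> vecs n" using assms(1) by (auto simp: linear_code_def)
  have sys: "systematic_first k C" using assms(8) by (simp add: rdelta_i_code_def)
  have md: "d \<le> card (supp c)" if "c \<in> C" "c \<noteq> 0" for c
  proof -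
    have "(\<lambda>c. card (supp c)) ` (C - {0}) \<subseteq> {..n}"
    proof
      fix x assume "x \<in> (\<lambda>c. card (supp c)) ` (C - {0})"
      then obtain c where c: "c \<in> C" "x = card (supp c)" by auto
      have "supp c \<subseteq> {..<n}" using code_supp_sub[OF Cn] c by (auto simp: code_supp_def)
      then have "card (supp c) \<le> n" using card_mono[of "{..<n}" "supp c"] by simp
      then show "x \<in> {..n}" using c by simp
    qed
    then have "finite ((\<lambda>c. card (supp c)) ` (C - {0}))" using finite_subset by blast
    moreover have "card (supp c) \<in> (\<lambda>c. card (supp c)) ` (C - {0})" using that by auto
    ultimately have "Min ((\<lambda>c. card (supp c)) ` (C - {0})) \<le> card (supp c)" by (rule Min_le)
    then show ?thesis using assms(5) unfolding min_dist_def by simp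
  qed
  have "int d = int n - int k + 1 - int m" using assms(9) mi by (simp add: t_def)
  then have dn: "d + k + m = n + 1" by linarith
  define j where "j = m + i"
  have jeq: "nat ((\<lceil>real k / real r\<rceil> - 1) * (int \<delta> - 1) + int i) = j"
    using mi by (simp add: j_def t_def)
  have "int i \<le> int n - int k - int m" using i mi by (simp add: t_def mult.commute)
  then have kjn: "k + j \<le> n" by (simp add: j_def)
  obtain E0 where E0: "fvs.subspace E0" "E0 \<subseteq> dual_code n C" "fvs.dim E0 = j" "card (code_supp E0) \<le> k + j"
    using upper_bound[OF C sys kjn] by blast
  have lb: "k + j \<le> card (code_supp E)" if "fvs.subspace E" "E \<subseteq> dual_code n C" "fvs.dim E = j" for E
    using lower_bound[OF C Cn assms(2) md dn that(1,2)] that(3) i by (simp add: j_def)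
  have "ghw (dual_code n C) j = k + j"
    unfolding ghw_def
  proof (rule Least_equality)
    show "\<exists>E. fvs.subspace E \<and> E \<subseteq> dual_code n C \<and> fvs.dim E = j \<and> card (code_supp E) = k + j"
      using E0 lb[OF E0(1-3)] by (intro exI[of _ E0]) auto
  next
    fix y assume "\<exists>E. fvs.subspace E \<and> E \<subseteq> dual_code n C \<and> fvs.dim E = j \<and> card (code_supp E) = y"
    then show "k + j \<le> y" using lb by blast
  qed
  then show "int (ghw (dual_code n C) (nat ((\<lceil>real k / real r\<rceil> - 1) * (int \<delta> - 1) + int i)))
             = int k + (\<lceil>real k / real r\<rceil> - 1) * (int \<delta> - 1) + int i"
    using jeq mi by (simp add: j_def t_def)
qed

end
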